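(* For weighted formulas, the proof system consisting of Axiom (A), Rules (R1)–(R5), and Rule (R6w) (in place of (R6)) is sound and complete: for every finite set $\Gamma$ of sentences and every sentence $\gamma$ (with weighted formulas as components), $\Gamma\vdash\gamma$ if and only if $\Gamma\models\gamma$.
   Context: Weighted setting. Fix a finite set of atomic propositions, finite sets of binary and unary connectives; each binary $\alpha$ has an arbitrary function $f_\alpha:[0,1]^2\times\mathbb R^2\to[0,1]$ and each unary $\rho$ an arbitrary $f_\rho:[0,1]\times\mathbb R\to[0,1]$. Weighted formulas: atoms are formulas; if $\sigma_1,\sigma_2,\sigma$ are formulas and $w_1,w_2,w\in\mathbb R$ are weights, then $(\sigma_1\,\alpha\,\sigma_2,w_1,w_2)$ and $(\rho\sigma,w)$ are formulas; their subformulas are $\sigma_1,\sigma_2$ resp. $\sigma$. A model assigns values in $[0,1]$ to atoms; the value of $(\sigma_1\,\alpha\,\sigma_2,w_1,w_2)$ is $f_\alpha(s_1,s_2,w_1,w_2)$ and of $(\rho\sigma,w)$ is $f_\rho(s,w)$, where $s_1,s_2,s$ are the values of $\sigma_1,\sigma_2,\sigma$. A sentence $(\sigma_1,\ldots,\sigma_k,S)$ has pairwise distinct formulas and $S\subseteq[0,1]^k$; $M$ satisfies it iff the tuple of values of the $\sigma_i$ lies in $S$. $\Gamma\models\gamma$: every model of all of $\Gamma$ is a model of $\gamma$; $\Gamma\vdash\gamma$: $\gamma$ derivable from $\Gamma$ by: (A) $(\sigma,[0,1])$ for every formula $\sigma$. (R1) For a permutation $\pi$: from $(\sigma_1,\ldots,\sigma_k,S)$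 infer $(\sigma_{\pi(1)},\ldots,\sigma_{\pi(k)},\{(s_{\pi(1)},\ldots,s_{\pi(k)}):(s_1,\ldots,s_k)\in S\})$. (R2) From $(\sigma_1,\ldots,\sigma_k,S)$ infer $(\sigma_1,\ldots,\sigma_m,S\times[0,1]^{m-k})$ (components kept distinct). (R3) From $(\sigma_1,\ldots,\sigma_k,S_1)$ and $(\sigma_1,\ldots,\sigma_k,S_2)$ infer $(\sigma_1,\ldots,\sigma_k,S_1\cap S_2)$. (R4) For $0<r<k$: from $(\sigma_1,\ldots,\sigma_k,S)$ infer $(\sigma_1,\ldots,\sigma_{k-r},\{(s_1,\ldots,s_{k-r}):(s_1,\ldots,s_k)\in S\})$. (R5) From $(\sigma_1,\ldots,\sigma_k,S)$ infer $(\sigma_1,\ldots,\sigma_k,S')$ whenever $S\subseteq S'\subseteq[0,1]^k$. (R6w) From $(\sigma_1,\ldots,\sigma_k,S)$ infer $(\sigma_1,\ldots,\sigma_k,S')$, where $S'$ is the set of $(s_1,\ldots,s_k)\in S$ such that $f_\alpha(s_i,s_j,w_1,w_2)=s_m$ whenever $\sigma_m$ is $(\sigma_i\,\alpha\,\sigma_j,w_1,w_2)$, and $f_\rho(s_i,w)=s_j$ whenever $\sigma_j$ is $(\rho\sigma_i,w)$. *)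

theory Defs
  imports Complex_Main
begin

text \<open>Atoms of type 'a, binary connectives of type 'b, unary connectives of type 'u.
  WBin alpha s1 s2 w1 w2 stands for (s1 alpha s2, w1, w2); WUn rho s w stands for (rho s, w).\<close>

datatype ('a, 'b, 'u) wform =
    WAtom 'a
  | WBin 'b "('a, 'b, 'u) wform" "('a, 'b, 'u) wform" real real
  | WUn 'u "('a, 'b, 'u) wform" real


primrec wval :: "('b \<Rightarrow> real \<Rightarrow> real \<Rightarrow> real \<Rightarrow> real \<Rightarrow> real) \<Rightarrow> ('u \<Rightarrow> real \<Rightarrow> real \<Rightarrow> real)
   \<Rightarrow> ('a \<Rightarrow> real) \<Rightarrow> ('a, 'b, 'u) wform \<Rightarrow> real" where
  "wval fb fu M (WAtom a) = M a"
| "wval fb fu M (WBin al s1 s2 w1 w2) = fb al (wval fb fu M s1) (wval fb fu M s2) w1 w2"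
| "wval fb fu M (WUn r s w) = fu r (wval fb fu M s) w"

definition admissible_conns ::
  "('b \<Rightarrow> real \<Rightarrow> real \<Rightarrow> real \<Rightarrow> real \<Rightarrow> real) \<Rightarrow> ('u \<Rightarrow> real \<Rightarrow> real \<Rightarrow> real) \<Rightarrow> bool" where
  "admissible_conns fb fu \<longleftrightarrow>
     (\<forall>al x y w1 w2. x \<in> {0..1} \<longrightarrow> y \<in> {0..1} \<longrightarrow> fb al x y w1 w2 \<in> {0..1}) \<and>
     (\<forall>r x w. x \<in> {0..1} \<longrightarrow> fu r x w \<in> {0..1})"

definition is_model :: "('a \<Rightarrow> real) \<Rightarrow> bool" where
  "is_model M \<longleftrightarrow> (\<forall>a. M a \<in> {0..1})"

text \<open>A sentence (sigma_1,...,sigma_k,S) is a pair of a list of formulas and a set of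
  k-tuples (represented as real lists of length k).\<close>
type_synonym ('a, 'b, 'u) wsentence = "('a, 'b, 'u) wform list \<times> real list set"

definition unit_cube :: "nat \<Rightarrow> real list set" where
  "unit_cube k = {s. length s = k \<and> set s \<subseteq> {0..1}}"

definition is_sentence :: "('a, 'b, 'u) wsentence \<Rightarrow> bool" where
  "is_sentence g \<longleftrightarrow> fst g \<noteq> [] \<and> distinct (fst g) \<and> snd g \<subseteq> unit_cube (length (fst g))"

definition wsat :: "('b \<Rightarrow> real \<Rightarrow> real \<Rightarrow> real \<Rightarrow> real \<Rightarrow> real) \<Rightarrow> ('u \<Rightarrow> real \<Rightarrow> real \<Rightarrow> real)
   \<Rightarrow> ('a \<Rightarrow> real) \<Rightarrow> ('a, 'b, 'u) wsentence \<Rightarrow> bool" where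
  "wsat fb fu M g \<longleftrightarrow> map (wval fb fu M) (fst g) \<in> snd g"

definition wentails :: "('b \<Rightarrow> real \<Rightarrow> real \<Rightarrow> real \<Rightarrow> real \<Rightarrow> real) \<Rightarrow> ('u \<Rightarrow> real \<Rightarrow> real \<Rightarrow> real)
   \<Rightarrow> ('a, 'b, 'u) wsentence set \<Rightarrow> ('a, 'b, 'u) wsentence \<Rightarrow> bool" where
  "wentails fb fu \<Gamma> g \<longleftrightarrow>
     (\<forall>M. is_model M \<longrightarrow> (\<forall>d\<in>\<Gamma>. wsat fb fu M d) \<longrightarrow> wsat fb fu M g)"

definition r6w_set :: "('b \<Rightarrow> real \<Rightarrow> real \<Rightarrow> real \<Rightarrow> real \<Rightarrow> real) \<Rightarrow> ('u \<Rightarrow> real \<Rightarrow> real \<Rightarrow> real)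
   \<Rightarrow> ('a, 'b, 'u) wform list \<Rightarrow> real list set \<Rightarrow> real list set" where
  "r6w_set fb fu xs S = {s \<in> S.
     (\<forall>i<length xs. \<forall>j<length xs. \<forall>m<length xs. \<forall>al w1 w2.
        xs ! m = WBin al (xs ! i) (xs ! j) w1 w2 \<longrightarrow> fb al (s ! i) (s ! j) w1 w2 = s ! m) \<and>
     (\<forall>i<length xs. \<forall>j<length xs. \<forall>r w.
        xs ! j = WUn r (xs ! i) w \<longrightarrow> fu r (s ! i) w = s ! j)}"

inductive wderiv :: "('b \<Rightarrow> real \<Rightarrow> real \<Rightarrow> real \<Rightarrow> real \<Rightarrow> real) \<Rightarrow> ('u \<Rightarrow> real \<Rightarrow> real \<Rightarrow> real)
   \<Rightarrow> ('a, 'b, 'u) wsentence set \<Rightarrow> ('a, 'b, 'u) wsentence \<Rightarrow> bool"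
  for fb fu \<Gamma> where
  hyp: "g \<in> \<Gamma> \<Longrightarrow> wderiv fb fu \<Gamma> g"
| A: "wderiv fb fu \<Gamma> ([\<sigma>], unit_cube 1)"
| R1: "wderiv fb fu \<Gamma> (xs, S) \<Longrightarrow> bij_betw \<pi> {..<length xs} {..<length xs} \<Longrightarrow>
       wderiv fb fu \<Gamma> (map (\<lambda>i. xs ! \<pi> i) [0..<length xs],
                       (\<lambda>s. map (\<lambda>i. s ! \<pi> i) [0..<length xs]) ` S)"
| R2: "wderiv fb fu \<Gamma> (xs, S) \<Longrightarrow> distinct (xs @ ys) \<Longrightarrow>
       wderiv fb fu \<Gamma> (xs @ ys, {s @ t | s t. s \<in> S \<and> t \<in> unit_cube (length ys)})"
| R3: "wderiv fb fu \<Gamma> (xs, S1) \<Longrightarrow> wderiv fb fu \<Gamma> (xs, S2) \<Longrightarrow>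
       wderiv fb fu \<Gamma> (xs, S1 \<inter> S2)"
| R4: "wderiv fb fu \<Gamma> (xs, S) \<Longrightarrow> 0 < r \<Longrightarrow> r < length xs \<Longrightarrow>
       wderiv fb fu \<Gamma> (take (length xs - r) xs, take (length xs - r) ` S)"
| R5: "wderiv fb fu \<Gamma> (xs, S) \<Longrightarrow> S \<subseteq> S' \<Longrightarrow> S' \<subseteq> unit_cube (length xs) \<Longrightarrow>
       wderiv fb fu \<Gamma> (xs, S')"
| R6w: "wderiv fb fu \<Gamma> (xs, S) \<Longrightarrow> wderiv fb fu \<Gamma> (xs, r6w_set fb fu xs S)"

end

theory Submission
  imports Defs
begin

fun idx :: "'x list \<Rightarrow> 'x \<Rightarrow> nat" where
  "idx [] x = 0"
| "idx (y#ys) x = (if y = x then 0 else Suc (idx ys x))"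

lemma idx_less: "x \<in> set xs \<Longrightarrow> idx xs x < length xs"
  by (induction xs) auto

lemma nth_idx: "x \<in> set xs \<Longrightarrow> xs ! idx xs x = x"
  by (induction xs) auto

lemma idx_nth: "distinct xs \<Longrightarrow> i < length xs \<Longrightarrow> idx xs (xs ! i) = i"
proof (induction xs arbitrary: i)
  case (Cons y ys) then show ?case by (cases i) (auto simp: nth_mem)
qed auto

lemma idx_append: "x \<in> set xs \<Longrightarrow> idx (xs @ ys) x = idx xs x"
  by (induction xs) auto

lemma map_idx_self: "distinct xs \<Longrightarrow> length s = length xs \<Longrightarrow> map (\<lambda>x. s ! idx xs x) xs = s"
  by (rule nth_equalityI) (auto simp: idx_nth)

lemma reorder:
  assumes d: "wderiv fb fu \<Gamma> (xs, S)" and "distinct xs" "distinct ys" "set xs = set ys"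
  shows "wderiv fb fu \<Gamma> (ys, (\<lambda>s. map (\<lambda>y. s ! idx xs y) ys) ` S)"
proof -
  have len: "length ys = length xs" using assms distinct_card by metis
  define \<pi> where "\<pi> i = idx xs (ys ! i)" for i
  have "bij_betw \<pi> {..<length xs} {..<length xs}"
  proof (rule bij_betw_imageI[OF _ ])
    show "inj_on \<pi> {..<length xs}"
    proof (rule inj_onI)
      fix i j assume "i \<in> {..<length xs}" "j \<in> {..<length xs}" "\<pi> i = \<pi> j"
      then have "xs ! \<pi> i = xs ! \<pi> j" by simp
      then have "ys ! i = ys ! j" using \<open>i \<in> _\<close> \<open>j \<in> _\<close> len assms(4)
        by (simp add: \<pi>_def nth_idx nth_mem)
      then show "i = j" using \<open>i \<in> _\<close> \<open>j \<in> _\<close> len assms(3) nth_eq_iff_index_eq by fastforce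
    qed
    then show "\<pi> ` {..<length xs} = {..<length xs}"
      using len assms(4) by (intro endo_inj_surj) (auto simp: \<pi>_def intro!: idx_less nth_mem)
  qed
  note r = R1[OF d this]
  have e1: "map (\<lambda>i. xs ! \<pi> i) [0..<length xs] = ys"
    using len assms(4) by (intro nth_equalityI) (auto simp: \<pi>_def nth_idx nth_mem)
  have e2: "(\<lambda>s. map (\<lambda>i. s ! \<pi> i) [0..<length xs]) = (\<lambda>s. map (\<lambda>y. s ! idx xs y) ys)"
    using len by (intro ext nth_equalityI) (auto simp: \<pi>_def)
  show ?thesis using r unfolding e1 e2 .
qed

lemma wval_range: "admissible_conns fb fu \<Longrightarrow> is_model M \<Longrightarrow> wval fb fu M \<phi> \<in> {0..1}"
  by (induction \<phi>) (auto simp: admissible_conns_def is_model_def simp del: atLeastAtMost_iff)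

lemma sound:
  assumes "wderiv fb fu \<Gamma> g" "admissible_conns fb fu" "is_model M" "\<forall>d\<in>\<Gamma>. wsat fb fu M d"
  shows "wsat fb fu M g"
  using assms(1)
proof induction
  case (hyp g) then show ?case using assms by auto
next
  case (A \<sigma>) then show ?case using wval_range[OF assms(2,3)]
    by (auto simp: wsat_def unit_cube_def simp del: atLeastAtMost_iff)
next
  case (R1 xs S \<pi>)
  have "\<forall>i<length xs. \<pi> i < length xs" using R1.hyps(2) by (auto simp: bij_betw_def)
  then have "map (wval fb fu M) (map (\<lambda>i. xs ! \<pi> i) [0..<length xs])
     = (\<lambda>s. map (\<lambda>i. s ! \<pi> i) [0..<length xs]) (map (wval fb fu M) xs)"
    by (intro nth_equalityI) auto
  then show ?case using R1.IH by (auto simp: wsat_def)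
next
  case (R2 xs S ys)
  have "map (wval fb fu M) ys \<in> unit_cube (length ys)" using wval_range[OF assms(2,3)]
    by (auto simp: unit_cube_def simp del: atLeastAtMost_iff)
  moreover have "map (wval fb fu M) xs \<in> S" using R2.IH by (simp add: wsat_def)
  ultimately show ?case unfolding wsat_def fst_conv snd_conv map_append by blast
next
  case (R3 xs S1 S2) then show ?case by (auto simp: wsat_def)
next
  case (R4 xs S r) then show ?case unfolding wsat_def fst_conv snd_conv take_map[symmetric] by blast
next
  case (R5 xs S S') then show ?case by (auto simp: wsat_def)
next
  case (R6w xs S) then show ?case by (auto simp: wsat_def r6w_set_def)
qed

primrec subs :: "('a, 'b, 'u) wform \<Rightarrow> ('a, 'b, 'u) wform set" where
  "subs (WAtom a) = {WAtom a}"
| "subs (WBin al a b w1 w2) = insert (WBin al a b w1 w2) (subs a \<union> subs b)"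
| "subs (WUn r a w) = insert (WUn r a w) (subs a)"

lemma finite_subs: "finite (subs \<phi>)" by (induction \<phi>) auto
lemma self_subs: "\<phi> \<in> subs \<phi>" by (cases \<phi>) auto
lemma subs_closed_bin: "WBin al a b w1 w2 \<in> subs \<phi> \<Longrightarrow> a \<in> subs \<phi> \<and> b \<in> subs \<phi>"
  by (induction \<phi>) (auto simp: self_subs)
lemma subs_closed_un: "WUn r a w \<in> subs \<phi> \<Longrightarrow> a \<in> subs \<phi>"
  by (induction \<phi>) (auto simp: self_subs)

lemma per_hyp:
  assumes "wderiv fb fu \<Gamma> d" "is_sentence d" "set (fst d) \<subseteq> set L" "distinct L"
  shows "\<exists>X. wderiv fb fu \<Gamma> (L, X) \<and> X \<subseteq> unit_cube (length L) \<and>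
     (\<forall>s\<in>X. map (\<lambda>x. s ! idx L x) (fst d) \<in> snd d)"
proof -
  obtain xs S where d: "d = (xs, S)" by (cases d)
  define ys where "ys = filter (\<lambda>x. x \<notin> set xs) L"
  have dxs: "distinct xs" and Sc: "S \<subseteq> unit_cube (length xs)"
    using assms(2) d by (auto simp: is_sentence_def)
  have dist: "distinct (xs @ ys)" using dxs assms(4) by (auto simp: ys_def)
  have setL: "set (xs @ ys) = set L" using assms(3) d by (auto simp: ys_def)
  define T where "T = {s @ t |s t. s \<in> S \<and> t \<in> unit_cube (length ys)}"
  have "wderiv fb fu \<Gamma> (xs @ ys, T)" unfolding T_def
    by (rule R2[OF _ dist]) (use assms(1) d in simp)
  from reorder[OF this dist assms(4) setL]
  have der: "wderiv fb fu \<Gamma> (L, (\<lambda>u. map (\<lambda>y. u ! idx (xs @ ys) y) L) ` T)" .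
  show ?thesis
  proof (intro exI conjI ballI subsetI, rule der)
    fix s assume "s \<in> (\<lambda>u. map (\<lambda>y. u ! idx (xs @ ys) y) L) ` T"
    then obtain s1 t where s: "s = map (\<lambda>y. (s1 @ t) ! idx (xs @ ys) y) L" and s1: "s1 \<in> S"
      and t: "t \<in> unit_cube (length ys)" unfolding T_def by blast
    have ls1: "length s1 = length xs" and s1c: "set s1 \<subseteq> {0..1}"
      using Sc s1 by (auto simp: unit_cube_def)
    have lu: "length (s1 @ t) = length (xs @ ys)" and uc: "set (s1 @ t) \<subseteq> {0..1}"
      using ls1 s1c t by (auto simp: unit_cube_def)
    show "s \<in> unit_cube (length L)" unfolding unit_cube_def
    proof (safe)
      show "length s = length L" using s by simp
    next
      fix v assume "v \<in> set s"
      then obtain y where y: "y \<in> set L" "v = (s1 @ t) ! idx (xs @ ys) y" using s by auto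
      have "idx (xs @ ys) y < length (s1 @ t)" using lu idx_less[of y "xs @ ys"] y(1) setL by (simp only:)
      then have "v \<in> set (s1 @ t)" using y(2) by (metis nth_mem)
      then show "v \<in> {0..1}" using uc by blast
    qed
    have "map (\<lambda>x. s ! idx L x) xs = map (\<lambda>x. s1 ! idx xs x) xs"
    proof (rule map_cong[OF refl])
      fix x assume x: "x \<in> set xs"
      then have xL: "x \<in> set L" using setL by auto
      have "s ! idx L x = (s1 @ t) ! idx (xs @ ys) (L ! idx L x)"
        using s idx_less[OF xL] by simp
      also have "\<dots> = (s1 @ t) ! idx xs x" using nth_idx[OF xL] idx_append[OF x] by simp
      also have "\<dots> = s1 ! idx xs x" using idx_less[OF x] ls1 by (simp add: nth_append)
      finally show "s ! idx L x = s1 ! idx xs x" .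
    qed
    also have "\<dots> = s1" using map_idx_self[OF dxs ls1] .
    finally show "map (\<lambda>x. s ! idx L x) (fst d) \<in> snd d" using d s1 by simp
  qed
qed

lemma base:
  assumes "L \<noteq> []" "distinct L"
  shows "\<exists>X. wderiv fb fu \<Gamma> (L, X) \<and> X \<subseteq> unit_cube (length L)"
proof -
  have "distinct ([hd L] @ tl L)" using assms by (cases L) auto
  from R2[OF A this] have "wderiv fb fu \<Gamma> (L,
     {s @ t |s t. s \<in> unit_cube 1 \<and> t \<in> unit_cube (length (tl L))})"
    using assms(1) by simp
  moreover have "{s @ t |s t. s \<in> unit_cube 1 \<and> t \<in> unit_cube (length (tl L))}
     \<subseteq> unit_cube (length L)" using assms(1) by (cases L) (auto simp: unit_cube_def simp del: atLeastAtMost_iff)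
  ultimately show ?thesis by blast
qed


lemma combine:
  assumes "finite \<Delta>" "\<Delta> \<subseteq> \<Gamma>" "\<forall>d\<in>\<Gamma>. is_sentence d" "\<forall>d\<in>\<Gamma>. set (fst d) \<subseteq> set L"
    "distinct L" "L \<noteq> []"
  shows "\<exists>X. wderiv fb fu \<Gamma> (L, X) \<and> X \<subseteq> unit_cube (length L) \<and>
     (\<forall>s\<in>X. \<forall>d\<in>\<Delta>. map (\<lambda>x. s ! idx L x) (fst d) \<in> snd d)"
  using assms(1,2)
proof (induction \<Delta> rule: finite_induct)
  case empty then show ?case using base[OF assms(6,5)] by auto
next
  case (insert d \<Delta>)
  then obtain X where X: "wderiv fb fu \<Gamma> (L, X)" "X \<subseteq> unit_cube (length L)"
     "\<forall>s\<in>X. \<forall>d\<in>\<Delta>. map (\<lambda>x. s ! idx L x) (fst d) \<in> snd d" by auto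
  have dG: "d \<in> \<Gamma>" using insert by auto
  obtain Y where Y: "wderiv fb fu \<Gamma> (L, Y)" "Y \<subseteq> unit_cube (length L)"
     "\<forall>s\<in>Y. map (\<lambda>x. s ! idx L x) (fst d) \<in> snd d"
    using per_hyp[OF hyp[OF dG] bspec[OF assms(3) dG] bspec[OF assms(4) dG] assms(5)] by blast
  have 1: "wderiv fb fu \<Gamma> (L, X \<inter> Y)" by (rule R3[OF X(1) Y(1)])
  have 2: "X \<inter> Y \<subseteq> unit_cube (length L)" using X(2) by blast
  have 3: "\<forall>s\<in>X \<inter> Y. \<forall>d\<in>insert d \<Delta>. map (\<lambda>x. s ! idx L x) (fst d) \<in> snd d"
    using X(3) Y(3) by blast
  show ?case by (rule exI[of _ "X \<inter> Y"]) (intro conjI 1 2 3)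
qed

lemma model_val:
  assumes s: "s \<in> r6w_set fb fu L X" and dL: "distinct L"
    and clB: "\<And>al a b w1 w2. WBin al a b w1 w2 \<in> set L \<Longrightarrow> a \<in> set L \<and> b \<in> set L"
    and clU: "\<And>r a w. WUn r a w \<in> set L \<Longrightarrow> a \<in> set L"
    and M: "\<And>a. WAtom a \<in> set L \<Longrightarrow> M a = s ! idx L (WAtom a)"
  shows "\<phi> \<in> set L \<Longrightarrow> wval fb fu M \<phi> = s ! idx L \<phi>"
proof (induction \<phi>)
  case (WAtom a) then show ?case using M by simp
next
  case (WBin al a b w1 w2)
  have ab: "a \<in> set L" "b \<in> set L" using clB[OF WBin.prems] by auto
  have eq: "L ! idx L (WBin al a b w1 w2) = WBin al (L ! idx L a) (L ! idx L b) w1 w2"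
    using ab WBin.prems by (simp add: nth_idx)
  have H: "\<forall>i<length L. \<forall>j<length L. \<forall>m<length L. \<forall>al w1 w2.
        L ! m = WBin al (L ! i) (L ! j) w1 w2 \<longrightarrow> fb al (s ! i) (s ! j) w1 w2 = s ! m"
    using s unfolding r6w_set_def mem_Collect_eq by (elim conjE)
  have "fb al (s ! idx L a) (s ! idx L b) w1 w2 = s ! idx L (WBin al a b w1 w2)"
    using H[rule_format, OF idx_less[OF ab(1)] idx_less[OF ab(2)] idx_less[OF WBin.prems] eq] .
  moreover have "wval fb fu M a = s ! idx L a" using WBin.IH(1) ab(1) .
  moreover have "wval fb fu M b = s ! idx L b" using WBin.IH(2) ab(2) .
  ultimately show ?case by simp
next
  case (WUn r a w)
  have a: "a \<in> set L" using clU[OF WUn.prems] .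
  have eq: "L ! idx L (WUn r a w) = WUn r (L ! idx L a) w"
    using a WUn.prems by (simp add: nth_idx)
  have H: "\<forall>i<length L. \<forall>j<length L. \<forall>r w.
        L ! j = WUn r (L ! i) w \<longrightarrow> fu r (s ! i) w = s ! j"
    using s unfolding r6w_set_def mem_Collect_eq by (elim conjE)
  have "fu r (s ! idx L a) w = s ! idx L (WUn r a w)"
    using H[rule_format, OF idx_less[OF a] idx_less[OF WUn.prems] eq] .
  moreover have "wval fb fu M a = s ! idx L a" using WUn.IH a .
  ultimately show ?case by simp
qed

theorem theorem5:
  fixes fb :: "'b::finite \<Rightarrow> real \<Rightarrow> real \<Rightarrow> real \<Rightarrow> real \<Rightarrow> real"
    and fu :: "'u::finite \<Rightarrow> real \<Rightarrow> real \<Rightarrow> real"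
    and \<Gamma> :: "('a::finite, 'b, 'u) wsentence set"
    and \<gamma> :: "('a, 'b, 'u) wsentence"
  assumes "admissible_conns fb fu"
    and "finite \<Gamma>"
    and "\<forall>d\<in>\<Gamma>. is_sentence d"
    and "is_sentence \<gamma>"
  shows "wderiv fb fu \<Gamma> \<gamma> \<longleftrightarrow> wentails fb fu \<Gamma> \<gamma>"
proof
  assume "wderiv fb fu \<Gamma> \<gamma>"
  then show "wentails fb fu \<Gamma> \<gamma>" unfolding wentails_def using sound[OF _ assms(1)] by blast
next
  assume ent: "wentails fb fu \<Gamma> \<gamma>"
  define U where "U = (\<Union>\<phi>\<in>set (fst \<gamma>) \<union> (\<Union>d\<in>\<Gamma>. set (fst d)). subs \<phi>)"
  have "finite U" unfolding U_def using assms(2) by (auto simp: finite_subs)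
  then obtain L where L: "set L = U" "distinct L" using finite_distinct_list by blast
  have gL: "set (fst \<gamma>) \<subseteq> set L" using L(1) self_subs unfolding U_def by blast
  have dL: "\<forall>d\<in>\<Gamma>. set (fst d) \<subseteq> set L" using L(1) self_subs unfolding U_def by blast
  have gne: "fst \<gamma> \<noteq> []" and gd: "distinct (fst \<gamma>)" and gc: "snd \<gamma> \<subseteq> unit_cube (length (fst \<gamma>))"
    using assms(4) by (auto simp: is_sentence_def)
  have Lne: "L \<noteq> []" using gL gne by auto
  have clB: "a \<in> set L \<and> b \<in> set L" if h: "WBin al a b w1 w2 \<in> set L" for al a b w1 w2
  proof -
    obtain \<phi> where \<phi>: "\<phi> \<in> set (fst \<gamma>) \<union> (\<Union>d\<in>\<Gamma>. set (fst d))" "WBin al a b w1 w2 \<in> subs \<phi>"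
      using h unfolding L(1) U_def UN_iff by blast
    have "a \<in> subs \<phi>" "b \<in> subs \<phi>" using subs_closed_bin[OF \<phi>(2)] by auto
    then show ?thesis unfolding L(1) U_def UN_iff using \<phi>(1) by blast
  qed
  have clU: "a \<in> set L" if h: "WUn r a w \<in> set L" for r a w
  proof -
    obtain \<phi> where \<phi>: "\<phi> \<in> set (fst \<gamma>) \<union> (\<Union>d\<in>\<Gamma>. set (fst d))" "WUn r a w \<in> subs \<phi>"
      using h unfolding L(1) U_def UN_iff by blast
    have "a \<in> subs \<phi>" using subs_closed_un[OF \<phi>(2)] .
    then show ?thesis unfolding L(1) U_def UN_iff using \<phi>(1) by blast
  qed
  obtain X where X: "wderiv fb fu \<Gamma> (L, X)" "X \<subseteq> unit_cube (length L)"
     "\<forall>s\<in>X. \<forall>d\<in>\<Gamma>. map (\<lambda>x. s ! idx L x) (fst d) \<in> snd d"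
    using combine[OF assms(2) order_refl assms(3) dL L(2) Lne] by blast
  define Y where "Y = r6w_set fb fu L X"
  have Yd: "wderiv fb fu \<Gamma> (L, Y)" unfolding Y_def by (rule R6w[OF X(1)])
  have key: "map (\<lambda>y. s ! idx L y) (fst \<gamma>) \<in> snd \<gamma>" if sY: "s \<in> Y" for s
  proof -
    have sX: "s \<in> X" using sY unfolding Y_def r6w_set_def mem_Collect_eq by (elim conjE)
    define M where "M = (\<lambda>a. if WAtom a \<in> set L then s ! idx L (WAtom a) else 0)"
    have val: "\<phi> \<in> set L \<Longrightarrow> wval fb fu M \<phi> = s ! idx L \<phi>" for \<phi>
      by (rule model_val[OF sY[unfolded Y_def] L(2) clB clU, where M=M]) (simp_all add: M_def)
    have sc: "length s = length L" "set s \<subseteq> {0..1}" using sX X(2) by (auto simp: unit_cube_def)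
    have "is_model M" unfolding is_model_def M_def
    proof
      fix a
      show "(if WAtom a \<in> set L then s ! idx L (WAtom a) else 0) \<in> {0..1}"
      proof (cases "WAtom a \<in> set L")
        case True
        then have "s ! idx L (WAtom a) \<in> set s" using idx_less sc(1) by (metis nth_mem)
        then show ?thesis using True sc(2) by auto
      qed simp
    qed
    moreover have "\<forall>d\<in>\<Gamma>. wsat fb fu M d"
    proof
      fix d assume d: "d \<in> \<Gamma>"
      have "map (wval fb fu M) (fst d) = map (\<lambda>x. s ! idx L x) (fst d)"
        using dL d val by (intro map_cong) auto
      moreover have "map (\<lambda>x. s ! idx L x) (fst d) \<in> snd d" using X(3) sX d by blast
      ultimately show "wsat fb fu M d" unfolding wsat_def by (simp only:)
    qed
    ultimately have "wsat fb fu M \<gamma>" using ent unfolding wentails_def by blast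
    moreover have "map (wval fb fu M) (fst \<gamma>) = map (\<lambda>x. s ! idx L x) (fst \<gamma>)"
      using gL val by (intro map_cong) auto
    ultimately show ?thesis by (simp add: wsat_def)
  qed
  define K where "K = fst \<gamma> @ filter (\<lambda>x. x \<notin> set (fst \<gamma>)) L"
  have dK: "distinct K" using gd L(2) by (auto simp: K_def)
  have sK: "set L = set K" using gL by (auto simp: K_def)
  define E where "E = (\<lambda>s. map (\<lambda>y. s ! idx L y) K) ` Y"
  have Ed: "wderiv fb fu \<Gamma> (K, E)" unfolding E_def by (rule reorder[OF Yd L(2) dK sK])
  define n where "n = length (fst \<gamma>)"
  have tK: "take n K = fst \<gamma>" by (simp add: K_def n_def)
  have tE: "take n ` E \<subseteq> snd \<gamma>"
  proof
    fix e assume "e \<in> take n ` E"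
    then obtain s where s: "s \<in> Y" "e = take n (map (\<lambda>y. s ! idx L y) K)" unfolding E_def by blast
    have "e = map (\<lambda>y. s ! idx L y) (fst \<gamma>)" using s(2) tK by (simp add: take_map)
    then show "e \<in> snd \<gamma>" using key[OF s(1)] by simp
  qed
  show "wderiv fb fu \<Gamma> \<gamma>"
  proof (cases "length K - n > 0")
    case True
    have lK: "length K - (length K - n) = n" by (simp add: K_def n_def)
    have "length K - n < length K" using True gne by (simp add: n_def K_def)
    from R4[OF Ed True this] have "wderiv fb fu \<Gamma> (fst \<gamma>, take n ` E)" unfolding lK tK .
    from R5[OF this tE] gc have "wderiv fb fu \<Gamma> (fst \<gamma>, snd \<gamma>)" by simp
    then show ?thesis by simp
  next
    case False
    then have "length K \<le> n" by simp
    then have KK: "K = fst \<gamma>" using tK by simp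
    have "E \<subseteq> take n ` E"
    proof
      fix e assume e: "e \<in> E"
      then have "length e = n" using KK unfolding E_def n_def by auto
      then have "e = take n e" by simp
      then show "e \<in> take n ` E" using e by blast
    qed
    with tE have "E \<subseteq> snd \<gamma>" by blast
    from R5[OF Ed[unfolded KK] this] gc have "wderiv fb fu \<Gamma> (fst \<gamma>, snd \<gamma>)" by simp
    then show ?thesis by simp
  qed
qed

end
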